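(* Let $p^{(0)}\in[0,1]^n$ and let $p^{(1)},p^{(2)},p^{(3)},\dots$ be random vectors in $[0,1]^n$ such that for every $h\ge1$, conditionally on $(p^{(0)},\dots,p^{(h-1)})$, the vector $p^{(h)}$ is a probabilistic aggregate of $p^{(h-1)}$. Then: (1) for every $h\ge 0$ and every $i$, if $p^{(h)}_i\in\{0,1\}$ then $p^{(h+1)}_i=p^{(h)}_i$ almost surely; consequently, along the sequence any entry that has been set to $0$ or $1$ remains set, and the number of positive entries of $p^{(h+1)}$ is at most that of $p^{(h)}$; (2) (transitivity) for all $0\le h_1<h_2$, conditionally on $(p^{(0)},\dots,p^{(h_1)})$, the vector $p^{(h_2)}$ is a probabilistic aggregate of $p^{(h_1)}$.
   Context: A random vector $q\in[0,1]^n$ is a probabilistic aggregate of a vector $r\in[0,1]^n$ if: (i) $\mathbb{E}[q_i]=r_i$ for all $i$; (ii) $\sum_i q_i=\sum_i r_i$ (with probability one); (iii) for every $J\subseteq[n]$, $\mathbb{E}\big[\prod_{i\in J}q_i\big]\le\prod_{i\in J}r_i$ and $\mathbb{E}\big[\prod_{i\in J}(1-q_i)\big]\le\prod_{i\in J}(1-r_i)$. *)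

theory Defs
  imports "HOL-Probability.Probability"
begin

text \<open>Vectors in [0,1]^n are functions nat => real, only indices i < n matter.
  The sigma-algebra generated by the history p^(0),...,p^(h).\<close>
definition hist :: "'a measure \<Rightarrow> (nat \<Rightarrow> 'a \<Rightarrow> nat \<Rightarrow> real) \<Rightarrow> nat \<Rightarrow> nat \<Rightarrow> 'a measure" where
  "hist M p n h = sigma (space M)
     {{\<omega> \<in> space M. p k \<omega> i \<in> B} | k i B. k \<le> h \<and> i < n \<and> B \<in> sets (borel :: real measure)}"

definition cond_prob_aggregate ::
  "'a measure \<Rightarrow> 'a measure \<Rightarrow> ('a \<Rightarrow> nat \<Rightarrow> real) \<Rightarrow> ('a \<Rightarrow> nat \<Rightarrow> real) \<Rightarrow> nat \<Rightarrow> bool" where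
  "cond_prob_aggregate M F q r n \<longleftrightarrow>
     (\<forall>i<n. (\<lambda>\<omega>. q \<omega> i) \<in> borel_measurable M) \<and>
     (\<forall>i<n. AE \<omega> in M. 0 \<le> q \<omega> i \<and> q \<omega> i \<le> 1) \<and>
     (\<forall>i<n. AE \<omega> in M. real_cond_exp M F (\<lambda>\<omega>. q \<omega> i) \<omega> = r \<omega> i) \<and>
     (AE \<omega> in M. (\<Sum>i<n. q \<omega> i) = (\<Sum>i<n. r \<omega> i)) \<and>
     (\<forall>J \<subseteq> {..<n}. AE \<omega> in M.
        real_cond_exp M F (\<lambda>\<omega>. \<Prod>i\<in>J. q \<omega> i) \<omega> \<le> (\<Prod>i\<in>J. r \<omega> i)) \<and>
     (\<forall>J \<subseteq> {..<n}. AE \<omega> in M.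
        real_cond_exp M F (\<lambda>\<omega>. \<Prod>i\<in>J. 1 - q \<omega> i) \<omega> \<le> (\<Prod>i\<in>J. 1 - r \<omega> i))"

end

theory Submission imports Defs begin

lemma psub: "prob_space M \<Longrightarrow> subalgebra M F \<Longrightarrow> sigma_finite_subalgebra M F"
  by (metis finite_measure_subalgebra.intro finite_measure_subalgebra_axioms.intro
      finite_measure_subalgebra_is_sigma_finite prob_space_def)

lemma rce_chain_le:
  assumes P: "prob_space M" and sF: "subalgebra M F" and sG: "subalgebra F G"
    and fi: "integrable M f" and gi: "integrable M g"
    and le: "AE x in M. real_cond_exp M F f x \<le> g x"
  shows "AE x in M. real_cond_exp M G f x \<le> real_cond_exp M G g x"
proof -
  have sG': "subalgebra M G" using sF sG unfolding subalgebra_def by auto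
  interpret F: sigma_finite_subalgebra M F using psub[OF P sF] .
  interpret G: sigma_finite_subalgebra M G using psub[OF P sG'] .
  have "AE x in M. real_cond_exp M G (real_cond_exp M F f) x = real_cond_exp M G f x"
    using G.real_cond_exp_nested_subalg[OF sF sG fi] .
  moreover have "AE x in M. real_cond_exp M G (real_cond_exp M F f) x \<le> real_cond_exp M G g x"
    by (rule G.real_cond_exp_mono[OF le F.real_cond_exp_int(1)[OF fi] gi])
  ultimately show ?thesis by auto
qed

lemma rce_chain_eq:
  assumes P: "prob_space M" and sF: "subalgebra M F" and sG: "subalgebra F G"
    and fi: "integrable M f" and gi: "integrable M g"
    and le: "AE x in M. real_cond_exp M F f x = g x"
  shows "AE x in M. real_cond_exp M G f x = real_cond_exp M G g x"
proof -
  have "AE x in M. real_cond_exp M G f x \<le> real_cond_exp M G g x"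
    by (rule rce_chain_le[OF assms(1-5)]) (use le in auto)
  moreover have "AE x in M. real_cond_exp M G g x \<le> real_cond_exp M G f x"
  proof -
    have sG': "subalgebra M G" using sF sG unfolding subalgebra_def by auto
    interpret F: sigma_finite_subalgebra M F using psub[OF P sF] .
    interpret G: sigma_finite_subalgebra M G using psub[OF P sG'] .
    have "AE x in M. real_cond_exp M G (real_cond_exp M F f) x = real_cond_exp M G f x"
      using G.real_cond_exp_nested_subalg[OF sF sG fi] .
    moreover have "AE x in M. real_cond_exp M G g x \<le> real_cond_exp M G (real_cond_exp M F f) x"
      by (rule G.real_cond_exp_mono[OF _ gi F.real_cond_exp_int(1)[OF fi]]) (use le in auto)
    ultimately show ?thesis by auto
  qed
  ultimately show ?thesis by auto
qed

lemma agg_zero: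
  assumes P: "prob_space M" and sF: "subalgebra M F" and qi: "integrable M q"
    and q0: "AE x in M. 0 \<le> q x" and ce: "AE x in M. real_cond_exp M F q x = r x"
    and rm: "r \<in> borel_measurable F"
  shows "AE x in M. r x = 0 \<longrightarrow> q x = 0"
proof -
  interpret F: sigma_finite_subalgebra M F using psub[OF P sF] .
  define A where "A = {x\<in>space F. r x = 0}"
  have AF: "A \<in> sets F" unfolding A_def using rm by measurable
  have AM: "A \<in> sets M" using AF sF unfolding subalgebra_def by auto
  have ind: "indicator A \<in> borel_measurable F" using AF by simp
  have qm: "q \<in> borel_measurable M" using qi by simp
  have ii: "integrable M (\<lambda>x. indicator A x * q x)"
    using integrable_mult_indicator[OF AM qi] by simp
  have "(\<integral>x. indicator A x * q x \<partial>M) = (\<integral>x. indicator A x * real_cond_exp M F q x \<partial>M)"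
    using F.real_cond_exp_intg(2)[OF ii ind qm] by simp
  also have "\<dots> = (\<integral>x. 0 \<partial>M)"
    apply (rule integral_cong_AE)
    using ce F.real_cond_exp_int(1)[OF qi] ind AM
      apply (auto simp: indicator_def A_def) 
    using sF unfolding subalgebra_def by auto
  finally have "(\<integral>x. indicator A x * q x \<partial>M) = 0" by simp
  moreover have "AE x in M. 0 \<le> indicator A x * q x" using q0 by (auto simp: indicator_def)
  ultimately have "AE x in M. indicator A x * q x = 0"
    using integral_nonneg_eq_0_iff_AE[OF ii] by simp
  then show ?thesis using sF unfolding subalgebra_def by (auto simp: A_def indicator_def)
qed


lemma hist_gen_sub: "{{\<omega> \<in> space M. p k \<omega> i \<in> B} | k i B. k \<le> h \<and> i < n \<and> B \<in> sets (borel :: real measure)} \<subseteq> Pow (space M)"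
  by auto

lemma hist_space: "space (hist M p n h) = space M"
  unfolding hist_def by (simp add: space_measure_of_conv)

lemma hist_sets: "sets (hist M p n h) = sigma_sets (space M) {{\<omega> \<in> space M. p k \<omega> i \<in> B} | k i B. k \<le> h \<and> i < n \<and> B \<in> sets (borel :: real measure)}"
  unfolding hist_def using hist_gen_sub[of M p h n] by (simp add: sets_measure_of_conv)

lemma hist_sub:
  assumes meas: "\<forall>h. \<forall>i<n. (\<lambda>\<omega>. p h \<omega> i) \<in> borel_measurable M"
  shows "subalgebra M (hist M p n h)"
  unfolding subalgebra_def hist_space hist_sets
proof (simp, rule sets.sigma_sets_subset, safe)
  fix k i and B :: "real set" assume "k \<le> h" "i < n" "B \<in> sets borel"
  then show "{\<omega> \<in> space M. p k \<omega> i \<in> B} \<in> sets M"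
    using meas measurable_sets[of "\<lambda>\<omega>. p k \<omega> i" M borel B]
    by (auto simp: vimage_def Int_def conj_commute)
qed

lemma hist_mono:
  assumes "h \<le> h'"
  shows "subalgebra (hist M p n h') (hist M p n h)"
  unfolding subalgebra_def hist_space hist_sets
  by (rule conjI[OF refl], rule sigma_sets_subseteq) (use assms in force)

lemma hist_meas:
  assumes "k \<le> h" "i < n"
  shows "(\<lambda>\<omega>. p k \<omega> i) \<in> borel_measurable (hist M p n h)"
proof (rule measurableI)
  fix x assume "x \<in> space (hist M p n h)" then show "p k x i \<in> space borel" by simp
next
  fix B :: "real set" assume "B \<in> sets borel"
  then have "{\<omega> \<in> space M. p k \<omega> i \<in> B} \<in> sets (hist M p n h)"
    unfolding hist_sets using assms by (intro sigma_sets.Basic) blast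
  then show "(\<lambda>\<omega>. p k \<omega> i) -` B \<inter> space (hist M p n h) \<in> sets (hist M p n h)"
    by (simp add: hist_space vimage_def Int_def conj_commute)
qed


lemma int_bdd:
  assumes "prob_space M" "f \<in> borel_measurable M" "\<forall>\<omega>\<in>space M. \<bar>f \<omega>\<bar> \<le> (1::real)"
  shows "integrable M f"
proof -
  interpret prob_space M by fact
  show ?thesis by (rule integrable_const_bound[where B=1]) (use assms in auto)
qed

lemma prod_bdd:
  assumes "\<forall>i\<in>J. 0 \<le> (f i::real) \<and> f i \<le> 1"
  shows "\<bar>\<Prod>i\<in>J. f i\<bar> \<le> 1" "\<bar>\<Prod>i\<in>J. 1 - f i\<bar> \<le> 1"
  using assms by (auto simp: prod_nonneg intro!: prod_le_1)

lemma cpa_D1: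
  assumes "cond_prob_aggregate M F q r n"
  shows "\<forall>i<n. (\<lambda>\<omega>. q \<omega> i) \<in> borel_measurable M"
  using assms unfolding cond_prob_aggregate_def by (elim conjE) assumption

lemma cpa_D2:
  assumes "cond_prob_aggregate M F q r n"
  shows "\<forall>i<n. AE \<omega> in M. real_cond_exp M F (\<lambda>\<omega>. q \<omega> i) \<omega> = r \<omega> i"
  using assms unfolding cond_prob_aggregate_def by (elim conjE) assumption

lemma cpa_D3:
  assumes "cond_prob_aggregate M F q r n"
  shows "AE \<omega> in M. (\<Sum>i<n. q \<omega> i) = (\<Sum>i<n. r \<omega> i)"
  using assms unfolding cond_prob_aggregate_def by (elim conjE) assumption

lemma cpa_D4:
  assumes "cond_prob_aggregate M F q r n"
  shows "\<forall>J \<subseteq> {..<n}. AE \<omega> in M. real_cond_exp M F (\<lambda>\<omega>. \<Prod>i\<in>J. q \<omega> i) \<omega> \<le> (\<Prod>i\<in>J. r \<omega> i)"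
  using assms unfolding cond_prob_aggregate_def by (elim conjE) assumption

lemma cpa_D5:
  assumes "cond_prob_aggregate M F q r n"
  shows "\<forall>J \<subseteq> {..<n}. AE \<omega> in M. real_cond_exp M F (\<lambda>\<omega>. \<Prod>i\<in>J. 1 - q \<omega> i) \<omega> \<le> (\<Prod>i\<in>J. 1 - r \<omega> i)"
  using assms unfolding cond_prob_aggregate_def by (elim conjE) assumption

lemma trans_step:
  assumes P: "prob_space M" and sF: "subalgebra M F" and sG: "subalgebra F G"
    and A1: "cond_prob_aggregate M F q r n" and A2: "cond_prob_aggregate M G r s n"
    and qb: "\<forall>\<omega>\<in>space M. \<forall>i<n. 0 \<le> q \<omega> i \<and> q \<omega> i \<le> 1"
    and rb: "\<forall>\<omega>\<in>space M. \<forall>i<n. 0 \<le> r \<omega> i \<and> r \<omega> i \<le> 1"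
  shows "cond_prob_aggregate M G q s n"
proof -
  note A1' = cpa_D1[OF A1] cpa_D2[OF A1] cpa_D3[OF A1] cpa_D4[OF A1] cpa_D5[OF A1]
  note A2' = cpa_D1[OF A2] cpa_D2[OF A2] cpa_D3[OF A2] cpa_D4[OF A2] cpa_D5[OF A2]
  have qm: "\<forall>i<n. (\<lambda>\<omega>. q \<omega> i) \<in> borel_measurable M" using A1'(1) .
  have rm: "\<forall>i<n. (\<lambda>\<omega>. r \<omega> i) \<in> borel_measurable M" using A2'(1) .
  have qi: "integrable M (\<lambda>\<omega>. q \<omega> i)" if "i<n" for i
    by (rule int_bdd[OF P]) (use qm qb that in auto)
  have ri: "integrable M (\<lambda>\<omega>. r \<omega> i)" if "i<n" for i
    by (rule int_bdd[OF P]) (use rm rb that in auto)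
  have qpi: "integrable M (\<lambda>\<omega>. \<Prod>i\<in>J. q \<omega> i)" "integrable M (\<lambda>\<omega>. \<Prod>i\<in>J. 1 - q \<omega> i)"
    if "J \<subseteq> {..<n}" for J
    proof -
    have m: "(\<lambda>\<omega>. q \<omega> i) \<in> borel_measurable M" if "i \<in> J" for i using qm \<open>J \<subseteq> {..<n}\<close> that by blast
    have b: "\<forall>i\<in>J. 0 \<le> q \<omega> i \<and> q \<omega> i \<le> 1" if "\<omega> \<in> space M" for \<omega> using qb \<open>J \<subseteq> {..<n}\<close> that by blast
    show "integrable M (\<lambda>\<omega>. \<Prod>i\<in>J. q \<omega> i)"
      by (rule int_bdd[OF P], rule borel_measurable_prod, rule m) (use prod_bdd(1)[OF b] in blast)+
    show "integrable M (\<lambda>\<omega>. \<Prod>i\<in>J. 1 - q \<omega> i)"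
      by (rule int_bdd[OF P], rule borel_measurable_prod, intro borel_measurable_diff borel_measurable_const m) (use prod_bdd(2)[OF b] in blast)+
  qed
  have rpi: "integrable M (\<lambda>\<omega>. \<Prod>i\<in>J. r \<omega> i)" "integrable M (\<lambda>\<omega>. \<Prod>i\<in>J. 1 - r \<omega> i)"
    if "J \<subseteq> {..<n}" for J
    proof -
    have m: "(\<lambda>\<omega>. r \<omega> i) \<in> borel_measurable M" if "i \<in> J" for i using rm \<open>J \<subseteq> {..<n}\<close> that by blast
    have b: "\<forall>i\<in>J. 0 \<le> r \<omega> i \<and> r \<omega> i \<le> 1" if "\<omega> \<in> space M" for \<omega> using rb \<open>J \<subseteq> {..<n}\<close> that by blast
    show "integrable M (\<lambda>\<omega>. \<Prod>i\<in>J. r \<omega> i)"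
      by (rule int_bdd[OF P], rule borel_measurable_prod, rule m) (use prod_bdd(1)[OF b] in blast)+
    show "integrable M (\<lambda>\<omega>. \<Prod>i\<in>J. 1 - r \<omega> i)"
      by (rule int_bdd[OF P], rule borel_measurable_prod, intro borel_measurable_diff borel_measurable_const m) (use prod_bdd(2)[OF b] in blast)+
  qed
  show ?thesis unfolding cond_prob_aggregate_def
  proof (intro conjI allI impI)
    show "(\<lambda>\<omega>. q \<omega> i) \<in> borel_measurable M" if "i<n" for i using qm that by blast
    show "AE \<omega> in M. 0 \<le> q \<omega> i \<and> q \<omega> i \<le> 1" if "i<n" for i using qb that by (intro AE_I2) auto
    show "AE \<omega> in M. real_cond_exp M G (\<lambda>\<omega>. q \<omega> i) \<omega> = s \<omega> i" if i: "i<n" for i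
    proof -
      have "AE \<omega> in M. real_cond_exp M G (\<lambda>\<omega>. q \<omega> i) \<omega> = real_cond_exp M G (\<lambda>\<omega>. r \<omega> i) \<omega>"
        by (rule rce_chain_eq[OF P sF sG qi[OF i] ri[OF i]]) (use A1'(2) i in blast)
      moreover have "AE \<omega> in M. real_cond_exp M G (\<lambda>\<omega>. r \<omega> i) \<omega> = s \<omega> i"
        using A2'(2) i by blast
      ultimately show ?thesis by auto
    qed
    show "AE \<omega> in M. (\<Sum>i<n. q \<omega> i) = (\<Sum>i<n. s \<omega> i)"
      using A1'(3) A2'(3) by auto
    show "AE \<omega> in M. real_cond_exp M G (\<lambda>\<omega>. \<Prod>i\<in>J. q \<omega> i) \<omega> \<le> (\<Prod>i\<in>J. s \<omega> i)" if J: "J \<subseteq> {..<n}" for J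
    proof -
      have "AE \<omega> in M. real_cond_exp M G (\<lambda>\<omega>. \<Prod>i\<in>J. q \<omega> i) \<omega> \<le> real_cond_exp M G (\<lambda>\<omega>. \<Prod>i\<in>J. r \<omega> i) \<omega>"
        by (rule rce_chain_le[OF P sF sG qpi(1)[OF J] rpi(1)[OF J]]) (use A1'(4) J in blast)
      moreover have "AE \<omega> in M. real_cond_exp M G (\<lambda>\<omega>. \<Prod>i\<in>J. r \<omega> i) \<omega> \<le> (\<Prod>i\<in>J. s \<omega> i)"
        using A2'(4) J by blast
      ultimately show ?thesis by auto
    qed
    show "AE \<omega> in M. real_cond_exp M G (\<lambda>\<omega>. \<Prod>i\<in>J. 1 - q \<omega> i) \<omega> \<le> (\<Prod>i\<in>J. 1 - s \<omega> i)" if J: "J \<subseteq> {..<n}" for J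
    proof -
      have "AE \<omega> in M. real_cond_exp M G (\<lambda>\<omega>. \<Prod>i\<in>J. 1 - q \<omega> i) \<omega> \<le> real_cond_exp M G (\<lambda>\<omega>. \<Prod>i\<in>J. 1 - r \<omega> i) \<omega>"
        by (rule rce_chain_le[OF P sF sG qpi(2)[OF J] rpi(2)[OF J]]) (use A1'(5) J in blast)
      moreover have "AE \<omega> in M. real_cond_exp M G (\<lambda>\<omega>. \<Prod>i\<in>J. 1 - r \<omega> i) \<omega> \<le> (\<Prod>i\<in>J. 1 - s \<omega> i)"
        using A2'(5) J by blast
      ultimately show ?thesis by auto
    qed
  qed
qed


theorem lemma3:
  fixes M :: "'a measure" and p :: "nat \<Rightarrow> 'a \<Rightarrow> nat \<Rightarrow> real" and n :: nat
    and p0 :: "nat \<Rightarrow> real"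
  assumes "prob_space M"
    and p0_range: "\<forall>i<n. 0 \<le> p0 i \<and> p0 i \<le> 1"
    and p0: "\<forall>\<omega>\<in>space M. \<forall>i<n. p 0 \<omega> i = p0 i"
    and meas: "\<forall>h. \<forall>i<n. (\<lambda>\<omega>. p h \<omega> i) \<in> borel_measurable M"
    and range: "\<forall>h. \<forall>\<omega>\<in>space M. \<forall>i<n. 0 \<le> p h \<omega> i \<and> p h \<omega> i \<le> 1"
    and agg: "\<forall>h\<ge>1. cond_prob_aggregate M (hist M p n (h - 1)) (p h) (p (h - 1)) n"
  shows "(\<forall>h. \<forall>i<n. AE \<omega> in M. p h \<omega> i \<in> {0, 1} \<longrightarrow> p (Suc h) \<omega> i = p h \<omega> i)
       \<and> (\<forall>h h'. \<forall>i<n. h \<le> h' \<longrightarrow> (AE \<omega> in M. p h \<omega> i \<in> {0, 1} \<longrightarrow> p h' \<omega> i = p h \<omega> i))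
       \<and> (\<forall>h. AE \<omega> in M. card {i. i < n \<and> p (Suc h) \<omega> i > 0} \<le> card {i. i < n \<and> p h \<omega> i > 0})
       \<and> (\<forall>h1 h2. h1 < h2 \<longrightarrow> cond_prob_aggregate M (hist M p n h1) (p h2) (p h1) n)"
proof -
  note P = \<open>prob_space M\<close>
  interpret prob_space M by fact
  have aggS: "cond_prob_aggregate M (hist M p n h) (p (Suc h)) (p h) n" for h
    using agg[rule_format, of "Suc h"] by simp
  have sub: "subalgebra M (hist M p n h)" for h by (rule hist_sub[OF meas])
  have pint: "integrable M (\<lambda>\<omega>. p h \<omega> i)" if "i < n" for h i
    by (rule int_bdd[OF P]) (use meas range that in auto)
  have P1: "AE \<omega> in M. p h \<omega> i \<in> {0, 1} \<longrightarrow> p (Suc h) \<omega> i = p h \<omega> i" if i: "i < n" for h i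
  proof -
    interpret F: sigma_finite_subalgebra M "hist M p n h" using psub[OF P sub] .
    have ce: "AE \<omega> in M. real_cond_exp M (hist M p n h) (\<lambda>\<omega>. p (Suc h) \<omega> i) \<omega> = p h \<omega> i"
      using cpa_D2[OF aggS] i by blast
    have hm: "(\<lambda>\<omega>. p h \<omega> i) \<in> borel_measurable (hist M p n h)" by (rule hist_meas) (use i in auto)
    have Z: "AE \<omega> in M. p h \<omega> i = 0 \<longrightarrow> p (Suc h) \<omega> i = 0"
      by (rule agg_zero[OF P sub pint[OF i] _ ce hm]) (use range i in \<open>intro AE_I2, auto\<close>)
    have i1: "integrable M (\<lambda>\<omega>. 1 - p (Suc h) \<omega> i)" using pint[OF i] by simp
    have c1: "AE \<omega> in M. real_cond_exp M (hist M p n h) (\<lambda>\<omega>. 1) \<omega> = 1"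
      by (rule F.real_cond_exp_F_meas) auto
    have "AE \<omega> in M. real_cond_exp M (hist M p n h) (\<lambda>\<omega>. 1 - p (Suc h) \<omega> i) \<omega>
        = real_cond_exp M (hist M p n h) (\<lambda>\<omega>. 1) \<omega> - real_cond_exp M (hist M p n h) (\<lambda>\<omega>. p (Suc h) \<omega> i) \<omega>"
      by (rule F.real_cond_exp_diff) (use pint[OF i] in auto)
    then have ce1: "AE \<omega> in M. real_cond_exp M (hist M p n h) (\<lambda>\<omega>. 1 - p (Suc h) \<omega> i) \<omega> = 1 - p h \<omega> i"
      using c1 ce by eventually_elim simp
    have O: "AE \<omega> in M. 1 - p h \<omega> i = 0 \<longrightarrow> 1 - p (Suc h) \<omega> i = 0"
      by (rule agg_zero[OF P sub i1 _ ce1]) (use range i hm in \<open>auto intro!: AE_I2\<close>)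
    show ?thesis using Z O by auto
  qed
  have P2: "AE \<omega> in M. p h \<omega> i \<in> {0, 1} \<longrightarrow> p h' \<omega> i = p h \<omega> i" if "h \<le> h'" "i < n" for h h' i
    using that(1)
  proof (induction h' rule: dec_induct)
    case base then show ?case by simp
  next
    case (step m)
    from step.IH P1[OF that(2), of m] show ?case by auto
  qed
  have P3: "AE \<omega> in M. card {i. i < n \<and> p (Suc h) \<omega> i > 0} \<le> card {i. i < n \<and> p h \<omega> i > 0}" for h
  proof -
    have "AE \<omega> in M. \<forall>i\<in>{..<n}. p h \<omega> i \<in> {0, 1} \<longrightarrow> p (Suc h) \<omega> i = p h \<omega> i"
      using P1 by (subst AE_finite_all) auto
    then show ?thesis
    proof (rule AE_mp)
      show "AE \<omega> in M. (\<forall>i\<in>{..<n}. p h \<omega> i \<in> {0, 1} \<longrightarrow> p (Suc h) \<omega> i = p h \<omega> i) \<longrightarrow> card {i. i < n \<and> p (Suc h) \<omega> i > 0} \<le> card {i. i < n \<and> p h \<omega> i > 0}"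
      proof (rule AE_I2, rule impI)
      fix \<omega> assume \<omega>: "\<omega> \<in> space M" and H: "\<forall>i\<in>{..<n}. p h \<omega> i \<in> {0, 1} \<longrightarrow> p (Suc h) \<omega> i = p h \<omega> i"
      have "{i. i < n \<and> p (Suc h) \<omega> i > 0} \<subseteq> {i. i < n \<and> p h \<omega> i > 0}"
      proof safe
        fix i assume "i < n" "p (Suc h) \<omega> i > 0"
        then show "p h \<omega> i > 0" using H range \<omega>
          by (metis insertCI lessThan_iff less_eq_real_def less_irrefl)
      qed
      then show "card {i. i < n \<and> p (Suc h) \<omega> i > 0} \<le> card {i. i < n \<and> p h \<omega> i > 0}"
        by (rule card_mono[rotated]) auto
    qed
    qed
  qed
  have P4: "cond_prob_aggregate M (hist M p n h1) (p (Suc h1 + k)) (p h1) n" for h1 k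
  proof (induction k)
    case 0 then show ?case using aggS by simp
  next
    case (Suc k)
    have "cond_prob_aggregate M (hist M p n h1) (p (Suc (Suc h1 + k))) (p h1) n"
      by (rule trans_step[OF P sub[of "Suc h1 + k"] hist_mono aggS[of "Suc h1 + k"] Suc.IH])
        (use range in auto)
    then show ?case by simp
  qed
  have P4': "cond_prob_aggregate M (hist M p n h1) (p h2) (p h1) n" if "h1 < h2" for h1 h2
    using P4[of h1 "h2 - Suc h1"] that by simp
  show ?thesis using P1 P2 P3 P4' by blast
qed

end
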